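(* For integers $0\le m<n$, the probability that the boundary Markov chain started at $M_0=n$ ever hits $m$ is \[ 1-\frac{(n)_{m+1}}{(n+1/2)_{m+1}} . \] In particular the probability of ever hitting $0$ from $n$ is $\frac{1}{2n+1}$, so the chain is transient.
   Context: The boundary Markov chain is the Markov chain $(M_n)_{n\ge0}$ on $\{0,1,2,\dots\}$ with $M_{n+1}=M_n+X_n$. Given $M_n=m$, its step $X_n$ has the law \[ \mathbb P(X_n=1\mid M_n=m)=\frac{2m+3}{3m+3}. \] For $1\le k\le m$, \[ \mathbb P(X_n=-k\mid M_n=m)=\frac{2(2k-2)!}{(k-1)!(k+1)!}\cdot\frac{m!^2(2m-2k+1)!}{(m-k)!^2(2m+1)!}. \] The descending factorial is $(x)_k=x(x-1)\cdots(x-k+1)=\Gamma(x+1)/\Gamma(x-k+1)$. *)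

theory Defs
  imports "HOL-Probability.Probability"
begin

text \<open>Descending factorial (x)_k = x(x-1)...(x-k+1).\<close>
definition dfact :: "real \<Rightarrow> nat \<Rightarrow> real" where
  "dfact x k = (\<Prod>i<k. (x - real i))"

text \<open>Probability of a downward jump of size k from state m (1 <= k <= m).\<close>
definition down_prob :: "nat \<Rightarrow> nat \<Rightarrow> real" where
  "down_prob m k =
     (2 * fact (2*k - 2) / (fact (k - 1) * fact (k + 1))) *
     (fact m ^ 2 * fact (2*m - 2*k + 1) / (fact (m - k) ^ 2 * fact (2*m + 1)))"

definition trans_weight :: "nat \<Rightarrow> nat \<Rightarrow> real" where
  "trans_weight m y =
     (if y = m + 1 then (2 * real m + 3) / (3 * real m + 3)
      else if y < m then down_prob m (m - y)
      else 0)"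

definition K :: "nat \<Rightarrow> nat pmf" where
  "K m = embed_pmf (trans_weight m)"

fun traj :: "nat \<Rightarrow> nat \<Rightarrow> nat list pmf" where
  "traj 0 x = return_pmf [x]"
| "traj (Suc N) x = bind_pmf (K x) (\<lambda>y. map_pmf (Cons x) (traj N y))"

text \<open>Probability of hitting m from x: supremum over N of hitting within N steps
  (the events are increasing in N, so this is the probability of ever hitting m).\<close>
definition hit_prob :: "nat \<Rightarrow> nat \<Rightarrow> real" where
  "hit_prob x m = (SUP N. measure_pmf.prob (traj N x) {xs. m \<in> set xs})"

definition return_prob :: "nat \<Rightarrow> real" where
  "return_prob x = (SUP N. measure_pmf.prob (traj N x) {xs. x \<in> set (tl xs)})"

end

theory Submission
  imports Defs
begin


lemma dfact_0[simp]: "dfact x 0 = 1" by (simp add: dfact_def)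
lemma dfact_Suc: "dfact x (Suc k) = dfact x k * (x - real k)"
  by (simp add: dfact_def)

lemma dfact_add: "dfact a (k + j) = dfact a k * dfact (a - real k) j"
  by (induction j) (simp_all add: dfact_Suc algebra_simps)

lemma dfact_zero: "y < k \<Longrightarrow> dfact (real y) k = 0"
  unfolding dfact_def by (rule prod_zero) auto

lemma dfact_half_nz: "dfact (real y + 1/2) k \<noteq> 0"
proof -
  have "real y + 1/2 - real i \<noteq> 0" for i
  proof
    assume "real y + 1/2 - real i = 0"
    then have "2 * real y + 1 = 2 * real i" by simp
    then have "2 * y + 1 = 2 * i" by linarith
    then show False by presburger
  qed
  then show ?thesis unfolding dfact_def by simp
qed

lemma dfact_half_nz': "k \<le> x \<Longrightarrow> dfact (real x - real k + 1/2) j \<noteq> 0"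
  using dfact_half_nz[of "x - k" j] by (simp add: of_nat_diff)

lemma fact_dfact: "k \<le> x \<Longrightarrow> (fact x :: real) = fact (x - k) * dfact (real x) k"
proof (induction k)
  case 0 then show ?case by simp
next
  case (Suc k)
  have "fact (x - k) = (real (x - k)) * (fact (x - Suc k) :: real)"
    using Suc.prems by (metis Suc_diff_Suc fact_Suc of_nat_Suc Suc_le_lessD diff_Suc_1 mult.commute)
  then show ?case using Suc by (simp add: dfact_Suc of_nat_diff)
qed

lemma fact2_dfact: "k \<le> x \<Longrightarrow> (fact (2*x+1) :: real) = fact (2*x+1 - 2*k) * 4^k * dfact (real x + 1/2) k * dfact (real x) k"
proof (induction k)
  case 0 then show ?case by simp
next
  case (Suc k)
  have e: "2*x+1 - 2*k = Suc (Suc (2*x+1 - 2* Suc k))" using Suc.prems by simp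
  have "(fact (2*x+1 - 2*k) :: real) = real (2*x+1-2*k) * real (2*x - 2*k) * fact (2*x+1 - 2*Suc k)"
    unfolding e using Suc.prems by (simp add: algebra_simps)
  also have "\<dots> = 4 * (real x + 1/2 - real k) * (real x - real k) * fact (2*x+1 - 2*Suc k)"
  proof -
    have a: "real (2*x+1-2*k) = 2*real x + 1 - 2*real k" using Suc.prems by (subst of_nat_diff) auto
    have b: "real (2*x-2*k) = 2*real x - 2*real k" using Suc.prems by (subst of_nat_diff) auto
    show ?thesis unfolding a b by (simp add: algebra_simps)
  qed
  finally have F: "(fact (2*x+1 - 2*k) :: real) = 4 * (real x + 1/2 - real k) * (real x - real k) * fact (2*x+1 - 2*Suc k)" .
  have IH: "(fact (2*x+1) :: real) = fact (2*x+1 - 2*k) * 4^k * dfact (real x + 1/2) k * dfact (real x) k"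
    using Suc by simp
  show ?case unfolding IH F dfact_Suc by (simp add: algebra_simps)
qed

definition cc :: "nat \<Rightarrow> real" where
  "cc k = 2 * fact (2*k - 2) / (fact (k - 1) * fact (k + 1))"
definition rr :: "nat \<Rightarrow> nat \<Rightarrow> real" where
  "rr M k = dfact (real M) k / (4^k * dfact (real M + 1/2) k)"
definition tt :: "nat \<Rightarrow> nat \<Rightarrow> real" where
  "tt M k = cc k * rr M k"

lemma down_eq: assumes "1 \<le> k" "k \<le> x" shows "down_prob x k = cc k * rr x k"
proof -
  have e: "2*x - 2*k + 1 = 2*x+1-2*k" using assms by simp
  have nz1: "(fact (x-k) :: real) \<noteq> 0" by simp
  have nz2: "(fact (2*x+1-2*k) :: real) \<noteq> 0" by simp
  have nz3: "dfact (real x + 1/2) k \<noteq> 0" by (rule dfact_half_nz)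
  have nz4: "dfact (real x) k \<noteq> 0" using fact_dfact[OF assms(2)] by auto
  show ?thesis unfolding down_prob_def cc_def rr_def e fact_dfact[OF assms(2)] fact2_dfact[OF assms(2)]
    using nz1 nz2 nz3 nz4 by (simp add: field_simps power2_eq_square)
qed

lemma cc_Suc: "cc (Suc (Suc j)) = cc (Suc j) * 2 * (2 * real j + 1) / (real j + 3)"
proof -
  have a: "2 * Suc (Suc j) - 2 = Suc (Suc (2*j))" by simp
  have b: "2 * Suc j - 2 = 2*j" by simp
  have f1: "(fact (Suc (Suc (2*j))) :: real) = (2*real j+2)*(2*real j+1)*fact (2*j)" by (simp add: algebra_simps)
  have f2: "(fact (Suc j - 1) :: real) = fact j" by simp
  have f3: "(fact (Suc (Suc j) - 1) :: real) = (real j+1) * fact j" by simp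
  have f4: "(fact (Suc j + 1) :: real) = (real j+2)*(real j+1) * fact j" by (simp add: algebra_simps)
  have f5: "(fact (Suc (Suc j) + 1) :: real) = (real j+3)*(real j+2)*(real j+1) * fact j" by (simp add: algebra_simps)
  have p: "(fact j :: real) \<noteq> 0" "(fact (2*j) :: real) \<noteq> 0" "real j + 1 \<noteq> 0" "real j + 2 \<noteq> 0" "real j + 3 \<noteq> 0" by auto
  show ?thesis unfolding cc_def a b f1 f2 f3 f4 f5 using p by (simp add: divide_simps) (simp add: algebra_simps)?
qed

lemma rr_Suc: "rr M (Suc k) = rr M k * (real M - real k) / (2 * (2 * real M + 1 - 2 * real k))"
proof -
  have nz: "2 * real M + 1 - 2 * real k \<noteq> 0"
  proof
    assume "2 * real M + 1 - 2 * real k = 0"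
    then have "2 * M + 1 = 2 * k" by linarith
    then show False by presburger
  qed
  have h: "real M + 1/2 - real k = (2 * real M + 1 - 2 * real k)/2" by simp
  show ?thesis unfolding rr_def dfact_Suc h using dfact_half_nz[of M k] nz by (simp add: divide_simps)
qed

lemma tt_partial: assumes "1 \<le> L" "L \<le> M"
  shows "(\<Sum>k=1..L. tt M k) = real M / (3 * (real M + 1)) - (real M - real L) * (2 * real L - 1) * tt M L / (3 * (real M + 1))"
  using assms
proof (induction L rule: dec_induct)
  case base
  have "tt M 1 = real M / (4 * real M + 2)" unfolding tt_def cc_def rr_def dfact_def by simp
  moreover have "real M + 1 \<noteq> 0" "4 * real M + 2 \<noteq> 0" "2 * real M + 1 \<noteq> 0" by auto
  ultimately show ?case by (simp add: divide_simps) (simp add: algebra_simps)?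
next
  case (step L)
  obtain j where j: "L = Suc j" using step.hyps(1) by (cases L) auto
  have nzM: "2 * real M + 1 - 2 * real L \<noteq> 0"
  proof
    assume "2 * real M + 1 - 2 * real L = 0"
    then have "2 * M + 1 = 2 * L" by linarith
    then show False by presburger
  qed
  have nzj: "real j + 3 \<noteq> 0" by simp
  have r: "tt M (Suc L) = tt M L * ((2 * real L - 1) * (real M - real L)) / ((real L + 2) * (2 * real M + 1 - 2 * real L))"
    unfolding tt_def j cc_Suc rr_Suc using nzM nzj unfolding j by (simp add: divide_simps) (simp add: algebra_simps)?
  have nz: "real L + 2 \<noteq> 0" "real M + 1 \<noteq> 0" by simp_all
  have "(\<Sum>k=1..Suc L. tt M k) = (\<Sum>k=1..L. tt M k) + tt M (Suc L)" using step.hyps by simp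
  also have "\<dots> = real M / (3 * (real M + 1)) - (real M - real L) * (2 * real L - 1) * tt M L / (3 * (real M + 1)) + tt M (Suc L)"
    using step by simp
  finally show ?case unfolding r using nz nzM by (simp add: divide_simps) (simp add: algebra_simps)?
qed

lemma tt_zero: "M < k \<Longrightarrow> tt M k = 0"
  unfolding tt_def rr_def using dfact_zero[of M k] by simp

lemma tt_sum: assumes "M \<le> x" shows "(\<Sum>k=1..x. tt M k) = real M / (3 * (real M + 1))"
proof (cases "M = 0")
  case True then show ?thesis using tt_zero by simp
next
  case False
  have "(\<Sum>k=1..x. tt M k) = (\<Sum>k=1..M. tt M k)"
    by (rule sum.mono_neutral_right) (use assms tt_zero in auto)
  also have "\<dots> = real M / (3 * (real M + 1))" using tt_partial[of M M] False by simp
  finally show ?thesis .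
qed

definition hj :: "nat \<Rightarrow> nat \<Rightarrow> real" where
  "hj j y = dfact (real y) j / dfact (real y + 1/2) j"

lemma dfact_swap: "dfact a k * dfact (a - real k) j = dfact a j * dfact (a - real j) k"
  using dfact_add[of a k j] dfact_add[of a j k] by (simp add: add.commute)

lemma rr_hj: assumes "k \<le> x" "j \<le> x"
  shows "rr x k * hj j (x-k) = hj j x * rr (x-j) k"
proof -
  have e1: "real (x-k) = real x - real k" "real (x-j) = real x - real j" using assms by (simp_all add: of_nat_diff)
  have e2: "real x - real k + 1/2 = (real x + 1/2) - real k" "real x - real j + 1/2 = (real x + 1/2) - real j" by simp_all
  have nz: "dfact (real x + 1/2) k \<noteq> 0" "dfact (real x + 1/2) j \<noteq> 0"
    "dfact (real x + 1/2 - real k) j \<noteq> 0" "dfact (real x + 1/2 - real j) k \<noteq> 0"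
    using dfact_half_nz[of x k] dfact_half_nz[of x j] dfact_half_nz'[OF assms(1), of j] dfact_half_nz'[OF assms(2), of k]
    by (simp_all add: algebra_simps)
  have "rr x k * hj j (x-k) = (dfact (real x) k * dfact (real x - real k) j) / (4^k * (dfact (real x + 1/2) k * dfact (real x + 1/2 - real k) j))"
    unfolding rr_def hj_def e1 e2 by simp
  also have "\<dots> = (dfact (real x) j * dfact (real x - real j) k) / (4^k * (dfact (real x + 1/2) j * dfact (real x + 1/2 - real j) k))"
    by (simp only: dfact_swap)
  also have "\<dots> = hj j x * rr (x-j) k"
    unfolding rr_def hj_def e1 e2 by simp
  finally show ?thesis .
qed

lemma down_sum: assumes "j \<le> x"
  shows "(\<Sum>k=1..x. down_prob x k * hj j (x-k)) = hj j x * (real (x-j) / (3 * (real (x-j) + 1)))"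
proof -
  have "(\<Sum>k=1..x. down_prob x k * hj j (x-k)) = (\<Sum>k=1..x. hj j x * tt (x-j) k)"
  proof (rule sum.cong)
    fix k assume k: "k \<in> {1..x}"
    then show "down_prob x k * hj j (x-k) = hj j x * tt (x-j) k"
      using down_eq[of k x] rr_hj[of k x j] assms unfolding tt_def by (simp add: algebra_simps)
  qed simp
  also have "\<dots> = hj j x * (\<Sum>k=1..x. tt (x-j) k)" by (simp add: sum_distrib_left)
  also have "\<dots> = hj j x * (real (x-j) / (3 * (real (x-j) + 1)))" using tt_sum[of "x-j" x] by simp
  finally show ?thesis .
qed

lemma tw_sum: "(\<Sum>y\<le>Suc x. trans_weight x y * g y) = (2 * real x + 3) / (3 * real x + 3) * g (Suc x) + (\<Sum>k=1..x. down_prob x k * g (x-k))"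
proof -
  have "(\<Sum>y\<le>Suc x. trans_weight x y * g y) = trans_weight x (Suc x) * g (Suc x) + trans_weight x x * g x + (\<Sum>y<x. trans_weight x y * g y)"
    by (simp add: atMost_Suc lessThan_Suc_atMost[symmetric] lessThan_Suc add.assoc)
  also have "(\<Sum>y<x. trans_weight x y * g y) = (\<Sum>y<x. down_prob x (x-y) * g y)"
    by (rule sum.cong) (auto simp: trans_weight_def)
  also have "\<dots> = (\<Sum>k=1..x. down_prob x k * g (x-k))"
    by (rule sum.reindex_bij_witness[where i="\<lambda>k. x-k" and j="\<lambda>y. x-y"]) auto
  finally show ?thesis by (simp add: trans_weight_def)
qed

lemma dfact_shift: "dfact (a + 1) j * (a + 1 - real j) = (a + 1) * dfact a j"
proof -
  have "dfact (a+1) (Suc j) = dfact (a+1) j * (a + 1 - real j)" by (simp add: dfact_Suc)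
  moreover have "dfact (a+1) (1 + j) = dfact (a+1) 1 * dfact a j" using dfact_add[of "a+1" 1 j] by simp
  moreover have "dfact (a+1) 1 = a + 1" by (simp add: dfact_def)
  ultimately show ?thesis by simp
qed

lemma harm: assumes "j \<le> x"
  shows "(\<Sum>y\<le>Suc x. trans_weight x y * hj j y) = hj j x"
proof -
  define A where "A = dfact (real x) j"
  define B where "B = dfact (real x + 1/2) j"
  have B: "B \<noteq> 0" unfolding B_def by (rule dfact_half_nz)
  have n1: "real x + 1 - real j \<noteq> 0" using assms by simp
  have n2: "2 * real x + 3 - 2 * real j \<noteq> 0" using assms by simp
  have A': "dfact (real (Suc x)) j = (real x + 1) * A / (real x + 1 - real j)"
    using dfact_shift[of "real x" j] n1 unfolding A_def by (simp add: field_simps)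
  have B': "dfact (real (Suc x) + 1/2) j = (2 * real x + 3) * B / (2 * real x + 3 - 2 * real j)"
    using dfact_shift[of "real x + 1/2" j] n2 unfolding B_def
    by (simp add: divide_simps algebra_simps) (simp add: algebra_simps)?
  have e: "real (x - j) = real x - real j" using assms by (simp add: of_nat_diff)
  have hx: "hj j x = A / B" unfolding hj_def A_def B_def by simp
  have hs: "hj j (Suc x) = dfact (real (Suc x)) j / dfact (real (Suc x) + 1/2) j" unfolding hj_def by simp
  have n3: "3 * real x + 3 \<noteq> 0" "2 * real x + 3 \<noteq> 0" "real x - real j + 1 \<noteq> 0" using assms by simp_all
  show ?thesis unfolding tw_sum down_sum[OF assms] hs A' B' hx e using B n1 n2 n3
    by (simp add: divide_simps) (simp add: algebra_simps)?
qed



lemma tw_nonneg: "trans_weight x y \<ge> 0"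
  unfolding trans_weight_def down_prob_def by (simp add: divide_nonneg_nonneg)

lemma tw_out: "Suc x < y \<Longrightarrow> trans_weight x y = 0"
  unfolding trans_weight_def by auto

lemma hj0[simp]: "hj 0 y = 1" unfolding hj_def by simp

lemma tw_total: "(\<Sum>y\<le>Suc x. trans_weight x y) = 1"
  using harm[of 0 x] by simp

lemma pmf_K: "pmf (K x) y = trans_weight x y"
proof -
  have "(\<integral>\<^sup>+y. ennreal (trans_weight x y) \<partial>count_space UNIV) = (\<Sum>y\<in>{..Suc x}. ennreal (trans_weight x y))"
  proof (rule nn_integral_count_space')
    fix y assume "y \<notin> {..Suc x}"
    then have "Suc x < y" by simp
    then show "ennreal (trans_weight x y) = 0" by (simp only: tw_out ennreal_0)
  qed simp_all
  also have "\<dots> = ennreal (\<Sum>y\<in>{..Suc x}. trans_weight x y)"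
    by (rule sum_ennreal) (rule tw_nonneg)
  also have "\<dots> = 1" by (simp only: tw_total ennreal_1)
  finally have I: "(\<integral>\<^sup>+y. ennreal (trans_weight x y) \<partial>count_space UNIV) = 1" .
  show ?thesis unfolding K_def by (rule pmf_embed_pmf[OF tw_nonneg I])
qed

lemma set_K: "set_pmf (K x) \<subseteq> {..Suc x}"
proof
  fix y assume "y \<in> set_pmf (K x)"
  then have "trans_weight x y \<noteq> 0" by (simp add: set_pmf_iff pmf_K)
  then show "y \<in> {..Suc x}" using tw_out[of x y] by (cases "Suc x < y") auto
qed

lemma prob_bind_K:
  "measure_pmf.prob (bind_pmf (K x) F) A = (\<Sum>y\<le>Suc x. trans_weight x y * measure_pmf.prob (F y) A)"
proof -
  have "emeasure (measure_pmf (bind_pmf (K x) F)) A = (\<integral>\<^sup>+y. emeasure (F y) A \<partial>measure_pmf (K x))"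
    by simp
  also have "\<dots> = (\<Sum>y\<le>Suc x. emeasure (F y) A * pmf (K x) y)"
    by (rule nn_integral_measure_pmf_support) (use set_K in auto)
  also have "\<dots> = (\<Sum>y\<le>Suc x. ennreal (trans_weight x y * measure_pmf.prob (F y) A))"
    by (rule sum.cong) (auto simp: pmf_K measure_pmf.emeasure_eq_measure ennreal_mult'' tw_nonneg mult.commute)
  also have "\<dots> = ennreal (\<Sum>y\<le>Suc x. trans_weight x y * measure_pmf.prob (F y) A)"
    by (rule sum_ennreal) (simp add: tw_nonneg)
  finally have E: "ennreal (measure_pmf.prob (bind_pmf (K x) F) A) = ennreal (\<Sum>y\<le>Suc x. trans_weight x y * measure_pmf.prob (F y) A)"
    by (simp only: measure_pmf.emeasure_eq_measure)
  have "0 \<le> (\<Sum>y\<le>Suc x. trans_weight x y * measure_pmf.prob (F y) A)"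
    by (intro sum_nonneg mult_nonneg_nonneg tw_nonneg) auto
  then show ?thesis using E by (subst (asm) ennreal_inj) auto
qed

definition hN :: "nat \<Rightarrow> nat \<Rightarrow> nat \<Rightarrow> real" where
  "hN N x m = measure_pmf.prob (traj N x) {xs. m \<in> set xs}"

lemma hN_0: "hN 0 x m = (if x = m then 1 else 0)"
  unfolding hN_def by (simp add: indicator_def)

lemma hN_Suc: "hN (Suc N) x m = (if x = m then 1 else (\<Sum>y\<le>Suc x. trans_weight x y * hN N y m))"
proof (cases "x = m")
  case True
  have "hN (Suc N) x m = (\<Sum>y\<le>Suc x. trans_weight x y * 1)"
    unfolding hN_def traj.simps prob_bind_K measure_map_pmf using True by simp
  then show ?thesis using True tw_total by simp
next
  case False
  have "hN (Suc N) x m = (\<Sum>y\<le>Suc x. trans_weight x y * hN N y m)"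
    unfolding hN_def traj.simps prob_bind_K measure_map_pmf using False
    by (intro sum.cong) (auto simp: vimage_def)
  then show ?thesis using False by simp
qed

lemma hN_bounds: "0 \<le> hN N x m" "hN N x m \<le> 1"
  unfolding hN_def by auto

lemma return_N: "measure_pmf.prob (traj N x) {xs. x \<in> set (tl xs)} = (case N of 0 \<Rightarrow> 0 | Suc N' \<Rightarrow> (\<Sum>y\<le>Suc x. trans_weight x y * hN N' y x))"
proof (cases N)
  case 0 then show ?thesis by simp
next
  case (Suc N')
  show ?thesis unfolding Suc traj.simps prob_bind_K measure_map_pmf hN_def
    by (auto simp: vimage_def)
qed

lemma hj_zero: "y \<le> m \<Longrightarrow> hj (Suc m) y = 0"
  unfolding hj_def using dfact_zero[of y "Suc m"] by simp

lemma hj_prod: "hj j y = (\<Prod>i<j. (real y - real i) / (real y + 1/2 - real i))"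
  unfolding hj_def dfact_def by (simp add: prod_dividef)

lemma hj_bounds: "0 \<le> hj (Suc m) y" "hj (Suc m) y \<le> 1"
proof -
  have "0 \<le> hj (Suc m) y \<and> hj (Suc m) y \<le> 1"
  proof (cases "y \<le> m")
    case True then show ?thesis using hj_zero by simp
  next
    case False
    have fi: "0 \<le> (real y - real i) / (real y + 1/2 - real i) \<and> (real y - real i) / (real y + 1/2 - real i) \<le> 1"
      if "i \<in> {..<Suc m}" for i
    proof -
      have "real i < real y" using that False by simp
      then show ?thesis by (simp add: divide_simps)
    qed
    have a: "0 \<le> (\<Prod>i<Suc m. (real y - real i) / (real y + 1/2 - real i))"
      by (rule prod_nonneg) (use fi in blast)
    have b: "(\<Prod>i<Suc m. (real y - real i) / (real y + 1/2 - real i)) \<le> 1"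
      by (rule prod_le_1) (use fi in blast)
    show ?thesis unfolding hj_prod using a b by blast
  qed
  then show "0 \<le> hj (Suc m) y" "hj (Suc m) y \<le> 1" by auto
qed

lemma hj_pos: "m < y \<Longrightarrow> 0 < hj (Suc m) y"
  unfolding hj_prod by (intro prod_pos) (auto simp: divide_simps)

lemma f_harm: assumes "y \<noteq> m" shows "(\<Sum>z\<le>Suc y. trans_weight y z * hj (Suc m) z) = hj (Suc m) y"
proof (cases "m < y")
  case True then show ?thesis using harm[of "Suc m" y] by simp
next
  case False
  then have "y < m" using assms by simp
  then show ?thesis using hj_zero[of _ m] by simp
qed

lemma factor_lim: "((\<lambda>y::nat. (real y - c) / (real y + 1/2 - c)) \<longlongrightarrow> 1) sequentially"
proof -
  have fl: "filterlim (\<lambda>y::nat. (1/2 - c) + real y) at_top sequentially"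
    by (rule filterlim_tendsto_add_at_top[OF tendsto_const filterlim_real_sequentially])
  have "((\<lambda>y::nat. 1 - 1/2 * inverse ((1/2 - c) + real y)) \<longlongrightarrow> 1 - 1/2 * 0) sequentially"
    by (intro tendsto_intros tendsto_inverse_0_at_top fl)
  moreover have "eventually (\<lambda>y. 1 - 1/2 * inverse ((1/2 - c) + real y) = (real y - c) / (real y + 1/2 - c)) sequentially"
  proof -
    have "eventually (\<lambda>y::nat. (1/2 - c) + real y > 0) sequentially"
      using fl by (simp add: filterlim_at_top_dense)
    then show ?thesis
    proof eventually_elim
      case (elim y)
      have e: "real y + 1/2 - c = 1/2 - c + real y" by simp
      have nz: "1/2 - c + real y \<noteq> 0" using elim by simp
      show ?case unfolding e using nz by (simp add: field_simps)
    qed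
  qed
  ultimately show ?thesis by (simp add: tendsto_cong)
qed

lemma hj_lim: "((\<lambda>y. hj j y) \<longlongrightarrow> 1) sequentially"
proof -
  have "((\<lambda>y. \<Prod>i<j. (real y - real i) / (real y + 1/2 - real i)) \<longlongrightarrow> (\<Prod>i<j. 1)) sequentially"
    by (intro tendsto_prod factor_lim)
  then show ?thesis unfolding hj_prod by simp
qed

lemma tw_up_pos: "trans_weight x (Suc x) > 0"
  unfolding trans_weight_def by simp

lemma maxp:
  fixes d :: "nat \<Rightarrow> real"
  assumes hm: "\<And>x. x \<noteq> m \<Longrightarrow> d x = (\<Sum>z\<le>Suc x. trans_weight x z * d z)"
    and dm: "d m = 0"
    and lim: "\<And>e. e > 0 \<Longrightarrow> \<exists>X. \<forall>y\<ge>X. d y < e"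
  shows "d y \<le> 0"
proof (rule ccontr)
  assume "\<not> d y \<le> 0"
  then have py: "d y > 0" by simp
  obtain X where X: "\<And>z. z \<ge> X \<Longrightarrow> d z < d y" using lim[OF py] by blast
  have yX: "y \<le> X" using X[of y] by (cases "y \<le> X") auto
  define s where "s = Max (d ` {..X})"
  have fin: "finite (d ` {..X})" "d ` {..X} \<noteq> {}" by auto
  have sy: "d y \<le> s" unfolding s_def using yX fin by (intro Max_ge) auto
  obtain x0 where x0': "x0 \<in> {..X}" "Max (d ` {..X}) = d x0"
    using Max_in[OF fin] by (rule imageE) auto
  then have x0: "x0 \<le> X" "d x0 = s" unfolding s_def by auto
  have sall: "d z \<le> s" for z
  proof (cases "z \<le> X")
    case True then show ?thesis unfolding s_def using fin by (intro Max_ge) auto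
  next
    case False then show ?thesis using X[of z] sy by simp
  qed
  have step: "d (Suc x) = s" if dx: "d x = s" for x
  proof -
    have xm: "x \<noteq> m" using dx dm sy py by auto
    have "(\<Sum>z\<le>Suc x. trans_weight x z * (s - d z)) = s * (\<Sum>z\<le>Suc x. trans_weight x z) - (\<Sum>z\<le>Suc x. trans_weight x z * d z)"
      by (simp add: algebra_simps sum_subtractf sum_distrib_left)
    also have "\<dots> = 0" using hm[OF xm] dx tw_total[of x] by simp
    finally have z: "(\<Sum>z\<le>Suc x. trans_weight x z * (s - d z)) = 0" .
    have nn: "\<forall>z\<in>{..Suc x}. 0 \<le> trans_weight x z * (s - d z)"
      using tw_nonneg sall by (simp add: mult_nonneg_nonneg)
    have "trans_weight x (Suc x) * (s - d (Suc x)) = 0"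
      using z nn sum_nonneg_eq_0_iff[of "{..Suc x}" "\<lambda>z. trans_weight x z * (s - d z)"] by simp
    then show ?thesis using tw_up_pos[of x] by simp
  qed
  have "d (x0 + k) = s" for k
    by (induction k) (use x0 step in auto)
  then have "d (x0 + X) = s" .
  moreover have "d (x0 + X) < d y" using X[of "x0 + X"] by simp
  ultimately show False using sy by simp
qed

lemma hN_le: "hN N y m \<le> 1 - hj (Suc m) y"
proof (induction N arbitrary: y)
  case 0
  then show ?case using hj_bounds[of m y] hj_zero[of m m] by (simp add: hN_0)
next
  case (Suc N)
  show ?case
  proof (cases "y = m")
    case True then show ?thesis using hj_zero[of m m] by (simp add: hN_Suc)
  next
    case False
    have "(\<Sum>z\<le>Suc y. trans_weight y z * hN N z m) \<le> (\<Sum>z\<le>Suc y. trans_weight y z * (1 - hj (Suc m) z))"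
      by (intro sum_mono mult_left_mono Suc tw_nonneg)
    also have "\<dots> = 1 - hj (Suc m) y"
      using tw_total[of y] f_harm[OF False] by (simp add: algebra_simps sum_subtractf)
    finally show ?thesis using False by (simp add: hN_Suc)
  qed
qed

lemma hN_mono: "hN N y m \<le> hN (Suc N) y m"
proof (induction N arbitrary: y)
  case 0
  show ?case
  proof (cases "y = m")
    case True then show ?thesis by (simp add: hN_0 hN_Suc)
  next
    case False then show ?thesis using hN_bounds[of "Suc 0" y m] by (simp add: hN_0)
  qed
next
  case (Suc N)
  show ?case
  proof (cases "y = m")
    case True then show ?thesis by (simp add: hN_Suc)
  next
    case False
    have "(\<Sum>z\<le>Suc y. trans_weight y z * hN N z m) \<le> (\<Sum>z\<le>Suc y. trans_weight y z * hN (Suc N) z m)"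
      by (intro sum_mono mult_left_mono Suc tw_nonneg)
    then show ?thesis using False by (simp only: hN_Suc if_False)
  qed
qed

lemma hN_lim: "(\<lambda>N. hN N y m) \<longlonglongrightarrow> (SUP N. hN N y m)"
proof (rule LIMSEQ_incseq_SUP)
  show "bdd_above (range (\<lambda>N. hN N y m))" by (rule bdd_aboveI2[where M=1]) (rule hN_bounds)
  show "incseq (\<lambda>N. hN N y m)" using hN_mono by (simp add: incseq_Suc_iff)
qed

lemma main_hit: "hit_prob n m = 1 - hj (Suc m) n"
proof -
  define H where "H y = (SUP N. hN N y m)" for y
  have hit: "hit_prob y m = H y" for y unfolding hit_prob_def H_def hN_def by simp
  have lim: "(\<lambda>N. hN N y m) \<longlonglongrightarrow> H y" for y unfolding H_def by (rule hN_lim)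
  have Hle: "H y \<le> 1 - hj (Suc m) y" for y
    using lim[of y] hN_le by (intro LIMSEQ_le_const2) auto
  have Hge: "0 \<le> H y" for y
    using lim[of y] hN_bounds by (intro LIMSEQ_le_const) auto
  have Hm: "H m = 1"
  proof -
    have "hN (Suc N) m m = 1" for N by (simp add: hN_Suc)
    then have "(\<lambda>N. hN (Suc N) m m) \<longlonglongrightarrow> 1" by simp
    moreover have "(\<lambda>N. hN (Suc N) m m) \<longlonglongrightarrow> H m" by (rule LIMSEQ_Suc[OF lim])
    ultimately show ?thesis using LIMSEQ_unique by metis
  qed
  have Hh: "H y = (\<Sum>z\<le>Suc y. trans_weight y z * H z)" if "y \<noteq> m" for y
  proof -
    have "(\<lambda>N. hN (Suc N) y m) \<longlonglongrightarrow> H y" by (rule LIMSEQ_Suc[OF lim])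
    moreover have "(\<lambda>N. hN (Suc N) y m) \<longlonglongrightarrow> (\<Sum>z\<le>Suc y. trans_weight y z * H z)"
      unfolding hN_Suc using that by (simp only: if_False) (intro tendsto_intros lim)
    ultimately show ?thesis using LIMSEQ_unique by blast
  qed
  define d where "d y = 1 - H y - hj (Suc m) y" for y
  have dh: "d x = (\<Sum>z\<le>Suc x. trans_weight x z * d z)" if "x \<noteq> m" for x
  proof -
    have "(\<Sum>z\<le>Suc x. trans_weight x z * d z) = (\<Sum>z\<le>Suc x. trans_weight x z) - (\<Sum>z\<le>Suc x. trans_weight x z * H z) - (\<Sum>z\<le>Suc x. trans_weight x z * hj (Suc m) z)"
      unfolding d_def by (simp add: right_diff_distrib sum_subtractf)
    also have "\<dots> = d x" unfolding d_def using tw_total[of x] Hh[OF that] f_harm[OF that] by simp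
    finally show ?thesis by simp
  qed
  have dm: "d m = 0" unfolding d_def using Hm hj_zero[of m m] by simp
  have dlim: "\<exists>X. \<forall>y\<ge>X. d y < e" if e: "e > 0" for e
  proof -
    obtain X where X: "\<forall>y\<ge>X. dist (hj (Suc m) y) 1 < e"
      using hj_lim[of "Suc m"] e unfolding LIMSEQ_def by blast
    have "\<forall>y\<ge>X. d y < e"
    proof (intro allI impI)
      fix y assume "y \<ge> X"
      then have "dist (hj (Suc m) y) 1 < e" using X by blast
      then have "1 - hj (Suc m) y < e" by (simp add: dist_real_def)
      then show "d y < e" unfolding d_def using Hge[of y] by simp
    qed
    then show ?thesis by blast
  qed
  have "d n \<le> 0" by (rule maxp[of m d, OF dh dm dlim]) auto
  then show ?thesis unfolding hit using Hle[of n] unfolding d_def by simp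
qed

lemma return_lt: "return_prob x < 1"
proof -
  define S where "S = (\<Sum>y\<le>Suc x. trans_weight x y * (1 - hj (Suc x) y))"
  have S0: "0 \<le> S" unfolding S_def using hj_bounds tw_nonneg by (intro sum_nonneg mult_nonneg_nonneg) auto
  have "(\<Sum>y\<le>Suc x. trans_weight x y * hj (Suc x) y) = trans_weight x (Suc x) * hj (Suc x) (Suc x)"
    using hj_zero[of _ x] by simp
  then have S1: "S = 1 - trans_weight x (Suc x) * hj (Suc x) (Suc x)"
    unfolding S_def using tw_total[of x] by (simp add: right_diff_distrib sum_subtractf)
  have "0 < trans_weight x (Suc x) * hj (Suc x) (Suc x)"
    using tw_up_pos[of x] hj_pos[of x "Suc x"] by simp
  then have S2: "S < 1" using S1 by simp
  have le: "measure_pmf.prob (traj N x) {xs. x \<in> set (tl xs)} \<le> S" for N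
  proof (cases N)
    case 0 then show ?thesis using S0 return_N[of N x] by simp
  next
    case (Suc N')
    have "(\<Sum>y\<le>Suc x. trans_weight x y * hN N' y x) \<le> S"
      unfolding S_def by (intro sum_mono mult_left_mono hN_le tw_nonneg)
    then show ?thesis using return_N[of N x] Suc by simp
  qed
  have "return_prob x \<le> S" unfolding return_prob_def by (rule cSUP_least) (use le in auto)
  then show ?thesis using S2 by simp
qed

theorem claim3p3:
  fixes m n :: nat
  assumes "m < n"
  shows "hit_prob n m = 1 - dfact (real n) (m + 1) / dfact (real n + 1/2) (m + 1)
         \<and> hit_prob n 0 = 1 / (2 * real n + 1)
         \<and> (\<forall>x. return_prob x < 1)"
proof (intro conjI allI)
  show "hit_prob n m = 1 - dfact (real n) (m + 1) / dfact (real n + 1/2) (m + 1)"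
    using main_hit[of n m] unfolding hj_def by simp
  have "hit_prob n 0 = 1 - real n / (real n + 1/2)"
    using main_hit[of n 0] unfolding hj_def dfact_def by simp
  also have "\<dots> = 1 / (2 * real n + 1)"
    by (simp add: divide_simps) (simp add: algebra_simps)?
  finally show "hit_prob n 0 = 1 / (2 * real n + 1)" .
  show "return_prob x < 1" for x by (rule return_lt)
qed

end
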